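(* Let $f:\subseteq X\rightrightarrows Y$ be a diverse problem, i.e. for every $x\in\mathrm{dom}(f)$ there is $y\in\mathrm{dom}(f)$ with $f(x)\cap f(y)=\emptyset$. Then $f$ is strongly co-complete: for every problem $g$, $f\le_{sW}\overline g\iff f\le_{sW}g$. If moreover the representation $\delta_Y$ is total, then $f$ is strongly co-total: for every problem $g$, $f\le_{sW}\mathsf{T}g\iff f\le_{sW}g$.
   Context: Represented space $(X,\delta_X)$: set with surjective partial $\delta_X:\subseteq\mathbb{N}^\mathbb{N}\to X$. A problem $f:\subseteq X\rightrightarrows Y$ is a partial multi-valued map with nonempty values on its domain; $F\vdash f$ means $\delta_YF(p)\in f(\delta_X(p))$ whenever $\delta_X(p)\in\mathrm{dom}(f)$. $f\le_{sW}g$ iff there are computable partial $H,K:\subseteq\mathbb{N}^\mathbb{N}\to\mathbb{N}^\mathbb{N}$ with $HGK\vdash f$ for all $G\vdash g$. For $p\in\mathbb{N}^\mathbb{N}$, $p-1$ is the concatenation of $p(0)-1,p(1)-1,\dots$ with $0-1$ the empty word. The completion of $(X,\delta_X)$ is $\overline X=X\cup\{\bot\}$ with $\delta_{\overline X}(p)=\delta_X(p-1)$ if $p-1$ is an infinite sequence in $\mathrm{dom}(\delta_X)$, $\delta_{\overline X}(p)=\bot$ otherwise. For $g:\subseteq U\rightrightarrows V$, the completion $\overline g:\overline U\rightrightarrows\overline V$ is $\overline g(u)=g(u)$ for $u\in\mathrm{dom}(g)$ and $\overline V$ otherwise; the totalization $\mathsf{T}g:U\rightrightarrows V$ is $\mathsf{T}g(u)=g(u)$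 for $u\in\mathrm{dom}(g)$ and $V$ otherwise. *)

theory Defs
  imports Main "HOL-Library.Nat_Bijection" "HOL-Library.Sublist" "HOL-Library.Infinite_Set"
begin

datatype recf = Zero | Succ | Proj nat | Comp recf "recf list" | Prim recf recf | Mn recf

lemma list_all2_mono_ind [mono]:
  "(\<And>x y. P x y \<longrightarrow> Q x y) \<Longrightarrow> list_all2 P xs ys \<longrightarrow> list_all2 Q xs ys"
  by (auto elim: list_all2_mono)

inductive rec_eval :: "recf \<Rightarrow> nat list \<Rightarrow> nat \<Rightarrow> bool" where
  "rec_eval Zero xs 0"
| "rec_eval Succ (x # xs) (Suc x)"
| "i < length xs \<Longrightarrow> rec_eval (Proj i) xs (xs ! i)"
| "list_all2 (\<lambda>g y. rec_eval g xs y) gs ys \<Longrightarrow> rec_eval f ys z \<Longrightarrow> rec_eval (Comp f gs) xs z"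
| "rec_eval f xs y \<Longrightarrow> rec_eval (Prim f g) (0 # xs) y"
| "rec_eval (Prim f g) (n # xs) y \<Longrightarrow> rec_eval g (y # n # xs) z
     \<Longrightarrow> rec_eval (Prim f g) (Suc n # xs) z"
| "rec_eval f (n # xs) 0 \<Longrightarrow> (\<forall>m<n. \<exists>y. 0 < y \<and> rec_eval f (m # xs) y)
     \<Longrightarrow> rec_eval (Mn f) xs n"

definition total_recursive :: "(nat \<Rightarrow> nat) \<Rightarrow> bool" where
  "total_recursive h \<longleftrightarrow> (\<exists>c. \<forall>n. rec_eval c [n] (h n))"

type_synonym baire = "nat \<Rightarrow> nat"

definition pref :: "baire \<Rightarrow> nat \<Rightarrow> nat list" where
  "pref p m = map p [0..<m]"

text \<open>A partial F on Baire space is computable iff it is computed (on its domain) by a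
  Type-2 machine, i.e. by a computable prefix-monotone word function h whose outputs on
  the prefixes of p converge to F(p).\<close>
definition computable :: "(baire \<Rightarrow> baire option) \<Rightarrow> bool" where
  "computable F \<longleftrightarrow> (\<exists>h :: nat list \<Rightarrow> nat list.
     total_recursive (\<lambda>n. list_encode (h (list_decode n))) \<and>
     (\<forall>v w. prefix v w \<longrightarrow> prefix (h v) (h w)) \<and>
     (\<forall>p q. F p = Some q \<longrightarrow>
        (\<forall>n. \<exists>m. n < length (h (pref p m))) \<and>
        (\<forall>m i. i < length (h (pref p m)) \<longrightarrow> h (pref p m) ! i = q i)))"

text \<open>A problem f :\<subseteq> X \<rightrightarrows> Y is modelled as 'x \<Rightarrow> 'y set, with dom(f) = {x. f x \<noteq> {}}.\<close>

definition represented :: "(baire \<Rightarrow> 'x option) \<Rightarrow> bool" where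
  "represented \<delta> \<longleftrightarrow> (\<forall>x. \<exists>p. \<delta> p = Some x)"

definition pdom :: "('x \<Rightarrow> 'y set) \<Rightarrow> 'x set" where
  "pdom f = {x. f x \<noteq> {}}"

definition realizes :: "(baire \<Rightarrow> 'x option) \<Rightarrow> (baire \<Rightarrow> 'y option) \<Rightarrow>
    (baire \<Rightarrow> baire option) \<Rightarrow> ('x \<Rightarrow> 'y set) \<Rightarrow> bool" where
  "realizes \<delta>X \<delta>Y F f \<longleftrightarrow> (\<forall>p x. \<delta>X p = Some x \<and> x \<in> pdom f \<longrightarrow>
      (\<exists>q y. F p = Some q \<and> \<delta>Y q = Some y \<and> y \<in> f x))"

definition sW_le :: "(baire \<Rightarrow> 'x option) \<Rightarrow> (baire \<Rightarrow> 'y option) \<Rightarrow> ('x \<Rightarrow> 'y set) \<Rightarrow>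
    (baire \<Rightarrow> 'u option) \<Rightarrow> (baire \<Rightarrow> 'v option) \<Rightarrow> ('u \<Rightarrow> 'v set) \<Rightarrow> bool" where
  "sW_le \<delta>X \<delta>Y f \<delta>U \<delta>V g \<longleftrightarrow> (\<exists>H K. computable H \<and> computable K \<and>
     (\<forall>G. realizes \<delta>U \<delta>V G g \<longrightarrow>
        realizes \<delta>X \<delta>Y (\<lambda>p. Option.bind (K p) (\<lambda>r. Option.bind (G r) H)) f))"

text \<open>p - 1: delete the zeros of p and subtract 1 from the other entries; it is an
  infinite sequence iff p has infinitely many nonzero entries.\<close>
definition minus1 :: "baire \<Rightarrow> baire" where
  "minus1 p = (\<lambda>k. p (enumerate {n. p n \<noteq> 0} k) - 1)"

text \<open>Completed space: 'x option, None playing the role of \<bottom>.\<close>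
definition compl_rep :: "(baire \<Rightarrow> 'x option) \<Rightarrow> baire \<Rightarrow> 'x option option" where
  "compl_rep \<delta> p = (if infinite {n. p n \<noteq> 0} \<and> \<delta> (minus1 p) \<noteq> None
                      then Some (\<delta> (minus1 p)) else Some None)"

definition compl_prob :: "('u \<Rightarrow> 'v set) \<Rightarrow> 'u option \<Rightarrow> 'v option set" where
  "compl_prob g u = (case u of Some u' \<Rightarrow> (if g u' \<noteq> {} then Some ` g u' else UNIV)
                              | None \<Rightarrow> UNIV)"

definition totalization :: "('u \<Rightarrow> 'v set) \<Rightarrow> 'u \<Rightarrow> 'v set" where
  "totalization g u = (if g u \<noteq> {} then g u else UNIV)"

definition diverse :: "('x \<Rightarrow> 'y set) \<Rightarrow> bool" where
  "diverse f \<longleftrightarrow> (\<forall>x\<in>pdom f. \<exists>y\<in>pdom f. f x \<inter> f y = {})"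

end

theory Submission
  imports Defs
begin


lemma re_zero: "rec_eval Zero xs 0" by (rule rec_eval.intros)
lemma re_succ: "z = Suc x \<Longrightarrow> rec_eval Succ (x#xs) z" by (simp add: rec_eval.intros(2))
lemma re_proj: "i < length xs \<Longrightarrow> v = xs!i \<Longrightarrow> rec_eval (Proj i) xs v"
  by (simp add: rec_eval.intros(3))
lemma re_proj': "i < length xs \<Longrightarrow> rec_eval (Proj i) xs (xs!i)"
  by (simp add: rec_eval.intros(3))
lemma re_comp1: "rec_eval g xs a \<Longrightarrow> rec_eval f [a] z \<Longrightarrow> rec_eval (Comp f [g]) xs z"
  by (rule rec_eval.intros(4)[where ys="[a]"]) auto
lemma re_comp2: "rec_eval g1 xs a \<Longrightarrow> rec_eval g2 xs b \<Longrightarrow> rec_eval f [a,b] z \<Longrightarrow> rec_eval (Comp f [g1,g2]) xs z"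
  by (rule rec_eval.intros(4)[where ys="[a,b]"]) auto
lemma re_comp3: "rec_eval g1 xs a \<Longrightarrow> rec_eval g2 xs b \<Longrightarrow> rec_eval g3 xs c \<Longrightarrow> rec_eval f [a,b,c] z \<Longrightarrow> rec_eval (Comp f [g1,g2,g3]) xs z"
  by (rule rec_eval.intros(4)[where ys="[a,b,c]"]) auto
lemma re_prim:
  assumes "rec_eval f xs a" "\<And>y n. rec_eval g (y#n#xs) (G y n)"
  shows "rec_eval (Prim f g) (n#xs) (rec_nat a (\<lambda>n y. G y n) n)"
proof (induction n)
  case 0 then show ?case using assms(1) by (simp add: rec_eval.intros(5))
next
  case (Suc n) then show ?case using assms(2)[of "rec_nat a (\<lambda>n y. G y n) n" n]
    by (simp add: rec_eval.intros(6))
qed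

definition "r_pred = Prim Zero (Proj 1)"
lemma re_pred:
  assumes "z = n - 1" shows "rec_eval r_pred [n] z"
proof -
  have "rec_eval r_pred [n] (rec_nat 0 (\<lambda>n y. n) n)"
    unfolding r_pred_def by (rule re_prim; intro re_zero re_proj' re_proj re_zero) (simp+)
  moreover have "rec_nat 0 (\<lambda>n y. n) n = n - 1" by (cases n) auto
  ultimately show ?thesis using assms by simp
qed

definition "r_sub' = Prim (Proj 0) (Comp r_pred [Proj 0])"
definition "r_sub = Comp r_sub' [Proj 1, Proj 0]"
lemma re_sub:
  assumes "z = a - b" shows "rec_eval r_sub [a, b] z"
proof -
  have "rec_eval r_sub' [b, a] (rec_nat a (\<lambda>n y. y - 1) b)"
    unfolding r_sub'_def by (rule re_prim; intro re_proj' re_proj re_comp1 re_pred re_zero) (simp+)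
  moreover have "rec_nat a (\<lambda>n y. y - 1) b = a - b" by (induction b) auto
  ultimately show ?thesis unfolding r_sub_def using assms by (intro re_comp2 re_proj) (simp+)
qed

definition "r_add = Prim (Proj 0) (Comp Succ [Proj 0])"
lemma re_add:
  assumes "z = a + b" shows "rec_eval r_add [a, b] z"
proof -
  have "rec_eval r_add [a, b] (rec_nat b (\<lambda>n y. Suc y) a)"
    unfolding r_add_def by (rule re_prim; intro re_proj' re_proj re_comp1 re_succ re_zero) (simp+)
  moreover have "rec_nat b (\<lambda>n y. Suc y) a = a + b" by (induction a) auto
  ultimately show ?thesis using assms by simp
qed

definition "r_tri = Prim Zero (Comp Succ [Comp r_add [Proj 0, Proj 1]])"
lemma re_tri:
  assumes "z = triangle n" shows "rec_eval r_tri [n] z"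
proof -
  have "rec_eval r_tri [n] (rec_nat 0 (\<lambda>n y. Suc (y + n)) n)"
    unfolding r_tri_def by (rule re_prim; intro re_zero re_proj' re_proj re_comp1 re_comp2 re_succ re_add re_zero) (simp+)
  moreover have "rec_nat 0 (\<lambda>n y. Suc (y + n)) n = triangle n" by (induction n) auto
  ultimately show ?thesis using assms by simp
qed

definition "r_pe = Comp r_add [Comp r_tri [Comp r_add [Proj 0, Proj 1]], Proj 0]"
lemma re_pe: "z = prod_encode (x, y) \<Longrightarrow> rec_eval r_pe [x, y] z"
  unfolding r_pe_def prod_encode_def
  by (intro re_proj' re_proj re_comp1 re_comp2 re_add re_tri re_zero) (simp+)

definition "sS m = (LEAST s. m < triangle (Suc s))"
definition "r_pdS = Mn (Comp r_sub [Comp Succ [Proj 1], Comp r_tri [Comp Succ [Proj 0]]])"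

lemma tri_ge: "s \<le> triangle s" by (induction s) auto

lemma re_pdS:
  assumes "z = sS m" shows "rec_eval r_pdS [m] z"
proof -
  have ex: "m < triangle (Suc m)" using tri_ge[of "Suc m"] by simp
  have e: "\<And>s. rec_eval (Comp r_sub [Comp Succ [Proj 1], Comp r_tri [Comp Succ [Proj 0]]]) [s, m] (Suc m - triangle (Suc s))"
    by (intro re_proj' re_proj re_comp1 re_comp2 re_succ re_sub re_tri re_zero) (simp+)
  show ?thesis unfolding assms r_pdS_def
  proof (rule rec_eval.intros(7))
    show "rec_eval (Comp r_sub [Comp Succ [Proj 1], Comp r_tri [Comp Succ [Proj 0]]]) [sS m, m] 0"
      using e[of "sS m"] LeastI[of "\<lambda>s. m < triangle (Suc s)", OF ex] unfolding sS_def by simp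
    show "\<forall>ma<sS m. \<exists>y>0. rec_eval (Comp r_sub [Comp Succ [Proj 1], Comp r_tri [Comp Succ [Proj 0]]]) [ma, m] y"
    proof (intro allI impI)
      fix k assume "k < sS m"
      then have "\<not> m < triangle (Suc k)" unfolding sS_def by (rule not_less_Least)
      then show "\<exists>y>0. rec_eval (Comp r_sub [Comp Succ [Proj 1], Comp r_tri [Comp Succ [Proj 0]]]) [k, m] y"
        using e[of k] by (intro exI[of _ "Suc m - triangle (Suc k)"]) auto
    qed
  qed
qed

lemma pd_sS: "prod_decode m = (m - triangle (sS m), sS m - (m - triangle (sS m)))"
proof -
  define s where "s = sS m"
  have ex: "m < triangle (Suc m)" using tri_ge[of "Suc m"] by simp
  have lt: "m < triangle (Suc s)" unfolding s_def sS_def using LeastI[of "\<lambda>s. m < triangle (Suc s)", OF ex] .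
  have le: "triangle s \<le> m"
  proof (cases s)
    case 0 then show ?thesis by simp
  next
    case (Suc k)
    then have "k < sS m" using s_def by simp
    then have "\<not> m < triangle (Suc k)" unfolding sS_def by (rule not_less_Least)
    then show ?thesis using Suc by simp
  qed
  have x: "m - triangle s \<le> s" using lt le by simp
  have "prod_encode (m - triangle s, s - (m - triangle s)) = m"
    unfolding prod_encode_def using x le by simp
  then have "prod_decode m = (m - triangle s, s - (m - triangle s))"
    by (metis prod_encode_inverse)
  then show ?thesis unfolding s_def .
qed

definition "r_fst = Comp r_sub [Proj 0, Comp r_tri [r_pdS]]"
definition "r_snd = Comp r_sub [r_pdS, r_fst]"
lemma re_fst: "z = fst (prod_decode m) \<Longrightarrow> rec_eval r_fst [m] z"
  unfolding r_fst_def pd_sS[of m] by (intro re_proj' re_proj re_comp1 re_comp2 re_sub re_tri re_pdS re_zero) (simp+)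
lemma re_snd: "z = snd (prod_decode m) \<Longrightarrow> rec_eval r_snd [m] z"
proof -
  assume z: "z = snd (prod_decode m)"
  show ?thesis unfolding r_snd_def
    by (rule re_comp2[OF re_pdS[OF refl] re_fst[OF refl] re_sub]) (simp add: z pd_sS[of m])
qed

definition "r_cond = Prim (Proj 0) (Proj 3)"
lemma re_cond:
  assumes "z = (if b = 0 then x else y)" shows "rec_eval r_cond [b, x, y] z"
proof -
  have "rec_eval r_cond [b, x, y] (rec_nat x (\<lambda>n r. y) b)"
    unfolding r_cond_def by (rule re_prim; intro re_proj' re_proj re_zero) (simp+)
  then show ?thesis using assms by (cases b) auto
qed

definition "hdc t = fst (prod_decode (t - 1))"
definition "tlc t = snd (prod_decode (t - 1))"
definition "r_hd = Comp r_fst [r_pred]"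
definition "r_tl = Comp r_snd [r_pred]"
lemma re_hd: "z = hdc t \<Longrightarrow> rec_eval r_hd [t] z"
  unfolding r_hd_def hdc_def by (intro re_comp1 re_fst re_pred re_zero) (simp+)
lemma re_tl: "z = tlc t \<Longrightarrow> rec_eval r_tl [t] z"
  unfolding r_tl_def tlc_def by (intro re_comp1 re_snd re_pred re_zero) (simp+)

definition "r_suffix = Prim (Proj 0) (Comp r_tl [Proj 0])"
lemma re_suffix:
  assumes "z = (tlc ^^ i) c" shows "rec_eval r_suffix [i, c] z"
proof -
  have "rec_eval r_suffix [i, c] (rec_nat c (\<lambda>n y. tlc y) i)"
    unfolding r_suffix_def by (rule re_prim; intro re_proj' re_proj re_comp1 re_tl re_zero) (simp+)
  moreover have "rec_nat c (\<lambda>n y. tlc y) i = (tlc ^^ i) c" by (induction i) auto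
  ultimately show ?thesis using assms by simp
qed

lemma pd0: "prod_decode 0 = (0, 0)"
proof -
  have "prod_encode (0, 0) = 0" by (simp add: prod_encode_def)
  then show ?thesis by (metis prod_encode_inverse)
qed
lemma tlc_enc: "tlc (list_encode xs) = list_encode (tl xs)"
proof (cases xs)
  case Nil then show ?thesis by (simp add: tlc_def pd0)
next
  case (Cons a l) then show ?thesis by (simp add: tlc_def)
qed
lemma hdc_enc: "xs \<noteq> [] \<Longrightarrow> hdc (list_encode xs) = hd xs"
  by (cases xs) (auto simp: hdc_def)
lemma hdc_Suc: "hdc (Suc (prod_encode (a, b))) = a" by (simp add: hdc_def)
lemma tlc_pow: "(tlc ^^ i) (list_encode xs) = list_encode (drop i xs)"
proof (induction i arbitrary: xs)
  case (Suc i)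
  have "(tlc ^^ Suc i) (list_encode xs) = (tlc ^^ i) (tlc (list_encode xs))"
    by (simp only: funpow_Suc_right o_apply)
  also have "\<dots> = list_encode (drop (Suc i) xs)" by (simp only: tlc_enc Suc.IH drop_Suc)
  finally show ?case .
qed simp
lemma len_enc: "length xs \<le> list_encode xs"
proof (induction xs)
  case (Cons x xs) then show ?case using le_prod_encode_2[of "list_encode xs" x] by simp
qed simp


definition "tcode = Comp r_suffix [Comp r_sub [Proj 2, Comp Succ [Proj 1]], Proj 2]"
definition "r_step K V = Comp r_cond [tcode, Proj 0, Comp r_cond [Comp K [Comp r_hd [tcode]], Proj 0,
   Comp Succ [Comp r_pe [Comp V [Comp r_hd [tcode]], Proj 0]]]]"
definition "stepf k v y i c = (let t = (tlc ^^ (c - Suc i)) c in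
   if t = 0 then y else if k (hdc t) = 0 then y else Suc (prod_encode (v (hdc t), y)))"
definition "r_acc K V = Prim Zero (r_step K V)"
definition "r_map K V = Comp (r_acc K V) [Proj 0, Proj 0]"

lemma re_tcode: "rec_eval tcode [y, i, c] ((tlc ^^ (c - Suc i)) c)"
  unfolding tcode_def by (intro re_proj' re_proj re_comp1 re_comp2 re_suffix re_sub re_succ) (simp+)

lemma re_step:
  assumes K: "\<And>x. rec_eval K [x] (k x)" and V: "\<And>x. rec_eval V [x] (v x)"
  shows "rec_eval (r_step K V) [y, i, c] (stepf k v y i c)"
proof -
  define t where "t = (tlc ^^ (c - Suc i)) c"
  have T: "rec_eval tcode [y, i, c] t" unfolding t_def by (rule re_tcode)
  have H: "rec_eval (Comp r_hd [tcode]) [y, i, c] (hdc t)" by (rule re_comp1[OF T re_hd]) simp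
  have KK: "rec_eval (Comp K [Comp r_hd [tcode]]) [y, i, c] (k (hdc t))" by (rule re_comp1[OF H K])
  have VV: "rec_eval (Comp V [Comp r_hd [tcode]]) [y, i, c] (v (hdc t))" by (rule re_comp1[OF H V])
  have P: "rec_eval (Comp r_pe [Comp V [Comp r_hd [tcode]], Proj 0]) [y, i, c] (prod_encode (v (hdc t), y))"
    by (rule re_comp2[OF VV re_proj' re_pe]) simp_all
  have S: "rec_eval (Comp Succ [Comp r_pe [Comp V [Comp r_hd [tcode]], Proj 0]]) [y, i, c] (Suc (prod_encode (v (hdc t), y)))"
    by (rule re_comp1[OF P re_succ]) simp
  have C1: "rec_eval (Comp r_cond [Comp K [Comp r_hd [tcode]], Proj 0,
   Comp Succ [Comp r_pe [Comp V [Comp r_hd [tcode]], Proj 0]]]) [y, i, c]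
     (if k (hdc t) = 0 then y else Suc (prod_encode (v (hdc t), y)))"
    by (rule re_comp3[OF KK re_proj' S re_cond]) simp_all
  show ?thesis unfolding r_step_def
    by (rule re_comp3[OF T re_proj' C1 re_cond]) (simp_all add: stepf_def t_def Let_def)
qed

lemma re_acc:
  assumes K: "\<And>x. rec_eval K [x] (k x)" and V: "\<And>x. rec_eval V [x] (v x)"
  shows "rec_eval (r_acc K V) [i, c] (rec_nat 0 (\<lambda>i y. stepf k v y i c) i)"
  unfolding r_acc_def by (rule re_prim[OF re_zero re_step[OF K V]])

lemma enc_zero_iff: "list_encode xs = 0 \<longleftrightarrow> xs = []"
  by (cases xs) auto

lemma acc_correct:
  assumes "i \<le> list_encode xs"
  shows "rec_nat 0 (\<lambda>i y. stepf k v y i (list_encode xs)) i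
       = list_encode (map v (filter (\<lambda>x. k x \<noteq> 0) (drop (list_encode xs - i) xs)))"
  using assms
proof (induction i)
  case 0
  have "length xs \<le> list_encode xs" by (rule len_enc)
  then show ?case by simp
next
  case (Suc i)
  define c where "c = list_encode xs"
  define j where "j = c - Suc i"
  have cj: "c - i = Suc j" using Suc.prems unfolding j_def c_def by simp
  have IH: "rec_nat 0 (\<lambda>i y. stepf k v y i c) i
       = list_encode (map v (filter (\<lambda>x. k x \<noteq> 0) (drop (Suc j) xs)))"
    using Suc unfolding c_def cj[unfolded c_def] by simp
  have t: "(tlc ^^ (c - Suc i)) c = list_encode (drop j xs)"
    unfolding j_def c_def by (simp add: tlc_pow)
  have step: "rec_nat 0 (\<lambda>i y. stepf k v y i c) (Suc i) = stepf k v (rec_nat 0 (\<lambda>i y. stepf k v y i c) i) i c"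
    by simp
  have dj: "drop (c - Suc i) xs = drop j xs" unfolding j_def ..
  have st: "stepf k v (list_encode (map v (filter (\<lambda>x. k x \<noteq> 0) (drop (Suc j) xs)))) i c
      = list_encode (map v (filter (\<lambda>x. k x \<noteq> 0) (drop j xs)))"
  proof (cases "j < length xs")
    case False
    then have t0: "(tlc ^^ (c - Suc i)) c = 0" using t by simp
    show ?thesis using False unfolding stepf_def Let_def t0 by simp
  next
    case True
    then have d: "drop j xs = xs ! j # drop (Suc j) xs" by (rule Cons_nth_drop_Suc[symmetric])
    have t1: "(tlc ^^ (c - Suc i)) c = list_encode (xs ! j # drop (Suc j) xs)" using t d by simp
    show ?thesis unfolding stepf_def Let_def t1 d by (simp add: hdc_Suc)
  qed
  have "rec_nat 0 (\<lambda>i y. stepf k v y i c) (Suc i) = list_encode (map v (filter (\<lambda>x. k x \<noteq> 0) (drop j xs)))"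
    using step IH st by simp
  then show ?case unfolding c_def[symmetric] dj .
qed

lemma tr_map_filter:
  assumes K: "\<And>x. rec_eval K [x] (k x)" and V: "\<And>x. rec_eval V [x] (v x)"
  shows "total_recursive (\<lambda>n. list_encode (map v (filter (\<lambda>x. k x \<noteq> 0) (list_decode n))))"
  unfolding total_recursive_def
proof (intro exI allI)
  fix n
  have "rec_eval (r_acc K V) [n, n] (rec_nat 0 (\<lambda>i y. stepf k v y i n) n)"
    by (rule re_acc[OF K V])
  moreover have "rec_nat 0 (\<lambda>i y. stepf k v y i n) n
     = list_encode (map v (filter (\<lambda>x. k x \<noteq> 0) (list_decode n)))"
    using acc_correct[of n "list_decode n" k v] by simp
  ultimately show "rec_eval (r_map K V) [n] (list_encode (map v (filter (\<lambda>x. k x \<noteq> 0) (list_decode n))))"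
    unfolding r_map_def by (intro re_comp2[OF re_proj' re_proj']) simp_all
qed

lemma tr_map_Suc: "total_recursive (\<lambda>n. list_encode (map Suc (list_decode n)))"
  using tr_map_filter[of Succ Suc Succ Suc] by (simp add: rec_eval.intros(2))

lemma tr_minus1: "total_recursive (\<lambda>n. list_encode (map (\<lambda>x. x - 1) (filter (\<lambda>x. x \<noteq> 0) (list_decode n))))"
proof -
  have a: "rec_eval (Proj 0) [x] x" for x using re_proj'[of 0 "[x]"] by simp
  have b: "rec_eval r_pred [x] (x - 1)" for x by (rule re_pred) simp
  show ?thesis using tr_map_filter[of "Proj 0" "\<lambda>x. x" r_pred "\<lambda>x. x - 1", OF a b] by simp
qed

lemma tr_comp: "total_recursive a \<Longrightarrow> total_recursive b \<Longrightarrow> total_recursive (\<lambda>n. a (b n))"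
  unfolding total_recursive_def by (metis re_comp1)



lemma computableI:
  assumes "total_recursive (\<lambda>n. list_encode (h (list_decode n)))"
    and "\<And>v w. prefix v w \<Longrightarrow> prefix (h v) (h w)"
    and "\<And>p q. F p = Some q \<Longrightarrow> (\<forall>n. \<exists>m. n < length (h (pref p m))) \<and>
            (\<forall>m i. i < length (h (pref p m)) \<longrightarrow> h (pref p m) ! i = q i)"
  shows "computable F"
  unfolding computable_def using assms by blast

lemma pref_eq: "(\<forall>i<length w. w ! i = q i) \<longleftrightarrow> w = pref q (length w)"
proof
  assume "\<forall>i<length w. w ! i = q i"
  then show "w = pref q (length w)" unfolding pref_def by (auto intro: nth_equalityI)
next
  assume e: "w = pref q (length w)"
  show "\<forall>i<length w. w ! i = q i"
  proof (intro allI impI)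
    fix i assume "i < length w"
    then have "pref q (length w) ! i = q i" unfolding pref_def by simp
    then show "w ! i = q i" using e by simp
  qed
qed

lemma pref_Suc: "pref q (Suc n) = pref q n @ [q n]"
  unfolding pref_def by simp

lemma length_pref[simp]: "length (pref q n) = n" unfolding pref_def by simp
lemma nth_pref[simp]: "i < n \<Longrightarrow> pref q n ! i = q i" unfolding pref_def by simp

definition plus1 :: "baire \<Rightarrow> baire" where "plus1 q = (\<lambda>n. Suc (q n))"
definition nz :: "baire \<Rightarrow> nat set" where "nz q = {n. q n \<noteq> 0}"
definition m1opt :: "baire \<Rightarrow> baire option" where
  "m1opt q = (if infinite (nz q) then Some (minus1 q) else None)"
definition wm :: "nat list \<Rightarrow> nat list" where "wm w = map (\<lambda>x. x - 1) (filter (\<lambda>x. x \<noteq> 0) w)"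
definition cnt :: "nat set \<Rightarrow> nat \<Rightarrow> nat" where "cnt S n = card {i\<in>S. i < n}"

lemma cnt_enum:
  fixes S :: "nat set"
  assumes "infinite S"
  shows "cnt S (enumerate S k) = k"
proof -
  have "{i\<in>S. i < enumerate S k} = enumerate S ` {..<k}"
  proof
    show "{i \<in> S. i < enumerate S k} \<subseteq> enumerate S ` {..<k}"
    proof
      fix i assume i: "i \<in> {i \<in> S. i < enumerate S k}"
      then obtain j where j: "enumerate S j = i" using enumerate_Ex[OF assms] by blast
      then have "j < k" using i assms by auto
      then show "i \<in> enumerate S ` {..<k}" using j by auto
    qed
    show "enumerate S ` {..<k} \<subseteq> {i \<in> S. i < enumerate S k}"
      using assms by (auto simp: enumerate_in_set)
  qed
  moreover have "inj_on (enumerate S) {..<k}" using inj_enumerate[OF assms] by (rule inj_on_subset) simp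
  ultimately show ?thesis unfolding cnt_def by (simp add: card_image)
qed

lemma enum_cnt:
  fixes S :: "nat set"
  assumes "infinite S" "n \<in> S"
  shows "enumerate S (cnt S n) = n"
proof -
  obtain j where "enumerate S j = n" using enumerate_Ex[OF assms] by blast
  then show ?thesis using cnt_enum[OF assms(1), of j] by simp
qed

lemma cnt_Suc: "cnt S (Suc n) = (if n \<in> S then Suc (cnt S n) else cnt S n)"
proof -
  have "{i\<in>S. i < Suc n} = (if n \<in> S then insert n {i\<in>S. i < n} else {i\<in>S. i < n})"
    by (auto simp: less_Suc_eq)
  then show ?thesis unfolding cnt_def by auto
qed

lemma cnt_mono: "m \<le> n \<Longrightarrow> cnt S m \<le> cnt S n"
  unfolding cnt_def by (rule card_mono) auto

lemma wm_pref:
  assumes "infinite (nz r)"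
  shows "wm (pref r n) = pref (minus1 r) (cnt (nz r) n)"
proof (induction n)
  case 0 then show ?case by (simp add: wm_def pref_def cnt_def)
next
  case (Suc n)
  show ?case
  proof (cases "r n = 0")
    case True
    then show ?thesis using Suc by (simp add: pref_Suc wm_def cnt_Suc nz_def)
  next
    case False
    then have nS: "n \<in> nz r" by (simp add: nz_def)
    have "minus1 r (cnt (nz r) n) = r n - 1"
      unfolding minus1_def using enum_cnt[OF assms nS] by (simp add: nz_def)
    then show ?thesis using Suc False nS by (simp add: pref_Suc wm_def cnt_Suc)
  qed
qed

lemma cnt_unbounded:
  assumes "infinite S" shows "\<exists>N. \<forall>L\<ge>N. k < cnt S L"
proof -
  have "cnt S (Suc (enumerate S k)) = Suc k"
    using cnt_Suc[of S "enumerate S k"] cnt_enum[OF assms] enumerate_in_set[OF assms] by simp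
  then show ?thesis using cnt_mono[of "Suc (enumerate S k)" _ S] by (metis le_less_trans lessI le_trans order_refl not_le)
qed

lemma enum_UNIV: "enumerate (UNIV :: nat set) k = k"
  using cnt_enum[of "UNIV :: nat set" k] by (simp add: cnt_def)

lemma minus1_plus1: "minus1 (plus1 r) = r"
  by (simp add: minus1_def plus1_def enum_UNIV)

lemma nz_plus1: "nz (plus1 r) = UNIV" by (simp add: nz_def plus1_def)

lemma m1opt_plus1: "m1opt (plus1 r) = Some r"
  by (simp add: m1opt_def nz_plus1 minus1_plus1)

lemma wm_mono: "prefix v w \<Longrightarrow> prefix (wm v) (wm w)"
  unfolding wm_def by (intro map_mono_prefix filter_mono_prefix)

lemma tr_h_comp:
  assumes "total_recursive (\<lambda>n. list_encode (a (list_decode n)))"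
    "total_recursive (\<lambda>n. list_encode (b (list_decode n)))"
  shows "total_recursive (\<lambda>n. list_encode (a (b (list_decode n))))"
  using tr_comp[OF assms] by simp

lemma tr_wm: "total_recursive (\<lambda>n. list_encode (wm (list_decode n)))"
  unfolding wm_def by (rule tr_minus1)

lemma post_plus1:
  assumes "computable K"
  shows "computable (\<lambda>p. Option.bind (K p) (\<lambda>r. Some (plus1 r)))"
proof -
  obtain h where h: "total_recursive (\<lambda>n. list_encode (h (list_decode n)))"
    "\<forall>v w. prefix v w \<longrightarrow> prefix (h v) (h w)"
    "\<forall>p q. K p = Some q \<longrightarrow> (\<forall>n. \<exists>m. n < length (h (pref p m))) \<and>
        (\<forall>m i. i < length (h (pref p m)) \<longrightarrow> h (pref p m) ! i = q i)"
    using assms unfolding computable_def by blast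
  show ?thesis
  proof (rule computableI[where h="\<lambda>w. map Suc (h w)"])
    show "total_recursive (\<lambda>n. list_encode (map Suc (h (list_decode n))))"
      by (rule tr_h_comp[OF tr_map_Suc h(1)])
    show "prefix (map Suc (h v)) (map Suc (h w))" if "prefix v w" for v w
      using h(2) that by (simp add: map_mono_prefix)
    fix p q assume "Option.bind (K p) (\<lambda>r. Some (plus1 r)) = Some q"
    then obtain r where "K p = Some r" "q = plus1 r" by (cases "K p") auto
    then show "(\<forall>n. \<exists>m. n < length (map Suc (h (pref p m)))) \<and>
        (\<forall>m i. i < length (map Suc (h (pref p m))) \<longrightarrow> map Suc (h (pref p m)) ! i = q i)"
      using h(3) by (simp add: plus1_def)
  qed
qed

lemma pre_plus1:
  assumes "computable H"
  shows "computable (\<lambda>q. H (plus1 q))"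
proof -
  obtain h where h: "total_recursive (\<lambda>n. list_encode (h (list_decode n)))"
    "\<forall>v w. prefix v w \<longrightarrow> prefix (h v) (h w)"
    "\<forall>p q. H p = Some q \<longrightarrow> (\<forall>n. \<exists>m. n < length (h (pref p m))) \<and>
        (\<forall>m i. i < length (h (pref p m)) \<longrightarrow> h (pref p m) ! i = q i)"
    using assms unfolding computable_def by blast
  have pp: "pref (plus1 p) m = map Suc (pref p m)" for p m by (simp add: pref_def plus1_def)
  show ?thesis
  proof (rule computableI[where h="\<lambda>w. h (map Suc w)"])
    show "total_recursive (\<lambda>n. list_encode (h (map Suc (list_decode n))))"
      by (rule tr_h_comp[OF h(1) tr_map_Suc])
    show "prefix (h (map Suc v)) (h (map Suc w))" if "prefix v w" for v w
      using h(2) that by (simp add: map_mono_prefix)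
    fix p q assume "H (plus1 p) = Some q"
    then show "(\<forall>n. \<exists>m. n < length (h (map Suc (pref p m)))) \<and>
        (\<forall>m i. i < length (h (map Suc (pref p m))) \<longrightarrow> h (map Suc (pref p m)) ! i = q i)"
      using h(3) by (simp add: pp[symmetric])
  qed
qed

lemma post_minus1:
  assumes "computable K"
  shows "computable (\<lambda>p. Option.bind (K p) m1opt)"
proof -
  obtain h where h: "total_recursive (\<lambda>n. list_encode (h (list_decode n)))"
    "\<forall>v w. prefix v w \<longrightarrow> prefix (h v) (h w)"
    "\<forall>p q. K p = Some q \<longrightarrow> (\<forall>n. \<exists>m. n < length (h (pref p m))) \<and>
        (\<forall>m i. i < length (h (pref p m)) \<longrightarrow> h (pref p m) ! i = q i)"
    using assms unfolding computable_def by blast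
  show ?thesis
  proof (rule computableI[where h="\<lambda>w. wm (h w)"])
    show "total_recursive (\<lambda>n. list_encode (wm (h (list_decode n))))"
      by (rule tr_h_comp[OF tr_wm h(1)])
    show "prefix (wm (h v)) (wm (h w))" if "prefix v w" for v w
      using h(2) that by (simp add: wm_mono)
    fix p q assume "Option.bind (K p) m1opt = Some q"
    then obtain r where r: "K p = Some r" "infinite (nz r)" "q = minus1 r"
      by (cases "K p") (auto simp: m1opt_def split: if_splits)
    have conv: "\<forall>n. \<exists>m. n < length (h (pref p m))"
      and ent: "\<forall>m i. i < length (h (pref p m)) \<longrightarrow> h (pref p m) ! i = r i"
      using h(3) r(1) by blast+
    have eq: "h (pref p m) = pref r (length (h (pref p m)))" for m
      using ent pref_eq by blast
    have weq: "wm (h (pref p m)) = pref q (cnt (nz r) (length (h (pref p m))))" for m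
      by (subst eq) (simp add: wm_pref[OF r(2)] r(3))
    show "(\<forall>n. \<exists>m. n < length (wm (h (pref p m)))) \<and>
        (\<forall>m i. i < length (wm (h (pref p m))) \<longrightarrow> wm (h (pref p m)) ! i = q i)"
    proof (intro conjI allI impI)
      fix n
      obtain N where N: "\<forall>L\<ge>N. n < cnt (nz r) L" using cnt_unbounded[OF r(2)] by blast
      obtain m where "N < length (h (pref p m))" using conv by blast
      then show "\<exists>m. n < length (wm (h (pref p m)))" using N weq by (metis length_pref less_imp_le)
    next
      fix m i assume "i < length (wm (h (pref p m)))"
      then show "wm (h (pref p m)) ! i = q i" using weq[of m] by simp
    qed
  qed
qed

lemma pre_minus1:
  assumes "computable H"
  shows "computable (\<lambda>q. Option.bind (m1opt q) H)"
proof -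
  obtain h where h: "total_recursive (\<lambda>n. list_encode (h (list_decode n)))"
    "\<forall>v w. prefix v w \<longrightarrow> prefix (h v) (h w)"
    "\<forall>p q. H p = Some q \<longrightarrow> (\<forall>n. \<exists>m. n < length (h (pref p m))) \<and>
        (\<forall>m i. i < length (h (pref p m)) \<longrightarrow> h (pref p m) ! i = q i)"
    using assms unfolding computable_def by blast
  show ?thesis
  proof (rule computableI[where h="\<lambda>w. h (wm w)"])
    show "total_recursive (\<lambda>n. list_encode (h (wm (list_decode n))))"
      by (rule tr_h_comp[OF h(1) tr_wm])
    show "prefix (h (wm v)) (h (wm w))" if "prefix v w" for v w
      using h(2) that by (simp add: wm_mono)
    fix p q assume "Option.bind (m1opt p) H = Some q"
    then have r: "infinite (nz p)" "H (minus1 p) = Some q"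
      by (auto simp: m1opt_def split: if_splits)
    have conv: "\<forall>n. \<exists>m. n < length (h (pref (minus1 p) m))"
      and ent: "\<forall>m i. i < length (h (pref (minus1 p) m)) \<longrightarrow> h (pref (minus1 p) m) ! i = q i"
      using h(3) r(2) by blast+
    have weq: "h (wm (pref p m)) = h (pref (minus1 p) (cnt (nz p) m))" for m
      by (simp add: wm_pref[OF r(1)])
    show "(\<forall>n. \<exists>m. n < length (h (wm (pref p m)))) \<and>
        (\<forall>m i. i < length (h (wm (pref p m))) \<longrightarrow> h (wm (pref p m)) ! i = q i)"
    proof (intro conjI allI impI)
      fix n
      obtain m0 where m0: "n < length (h (pref (minus1 p) m0))" using conv by blast
      have "cnt (nz p) (enumerate (nz p) m0) = m0" by (rule cnt_enum[OF r(1)])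
      then show "\<exists>m. n < length (h (wm (pref p m)))" using m0 weq by metis
    next
      fix m i assume "i < length (h (wm (pref p m)))"
      then show "h (wm (pref p m)) ! i = q i" using weq[of m] ent by simp
    qed
  qed
qed



lemma realizer_ex:
  assumes "represented \<delta>V"
  shows "\<exists>G. realizes \<delta>U \<delta>V G g"
proof -
  define G where "G r = (case \<delta>U r of None \<Rightarrow> None
     | Some u \<Rightarrow> (if g u \<noteq> {} then Some (SOME q. \<exists>v. \<delta>V q = Some v \<and> v \<in> g u) else None))" for r
  have "realizes \<delta>U \<delta>V G g"
    unfolding realizes_def
  proof (intro allI impI)
    fix r u assume a: "\<delta>U r = Some u \<and> u \<in> pdom g"
    then obtain v where v: "v \<in> g u" by (auto simp: pdom_def)
    obtain q where "\<delta>V q = Some v" using assms unfolding represented_def by blast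
    then have ex: "\<exists>q. \<exists>v. \<delta>V q = Some v \<and> v \<in> g u" using v by blast
    show "\<exists>q y. G r = Some q \<and> \<delta>V q = Some y \<and> y \<in> g u"
      using someI_ex[OF ex] a by (auto simp: G_def pdom_def)
  qed
  then show ?thesis by blast
qed

lemma represented_compl:
  assumes "represented \<delta>"
  shows "represented (compl_rep \<delta>)"
  unfolding represented_def
proof
  fix y
  show "\<exists>p. compl_rep \<delta> p = Some y"
  proof (cases y)
    case None
    have "compl_rep \<delta> (\<lambda>_. 0) = Some None" by (simp add: compl_rep_def)
    then show ?thesis using None by blast
  next
    case (Some v)
    obtain q where q: "\<delta> q = Some v" using assms unfolding represented_def by blast
    have "compl_rep \<delta> (plus1 q) = Some (Some v)"
      using q minus1_plus1[of q] nz_plus1[of q] by (simp add: compl_rep_def nz_def)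
    then show ?thesis using Some by blast
  qed
qed

lemma compl_rep_Some: "\<exists>y. compl_rep \<delta> p = Some y"
  by (simp add: compl_rep_def)

lemma compl_rep_SomeSome:
  "compl_rep \<delta> p = Some (Some u) \<longleftrightarrow> infinite (nz p) \<and> \<delta> (minus1 p) = Some u"
  by (auto simp: compl_rep_def nz_def)

lemma compl_rep_plus1: "\<delta> r = Some u \<Longrightarrow> compl_rep \<delta> (plus1 r) = Some (Some u)"
  by (simp add: compl_rep_SomeSome nz_plus1 minus1_plus1)

lemma compl_prob_UNIV:
  "compl_prob g w \<noteq> UNIV \<Longrightarrow> \<exists>u. w = Some u \<and> g u \<noteq> {}"
  by (cases w) (auto simp: compl_prob_def)

lemma pdom_compl_prob: "pdom (compl_prob g) = UNIV"
  by (auto simp: pdom_def compl_prob_def split: option.splits)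

lemma compl_back:
  assumes "sW_le \<delta>X \<delta>Y f \<delta>U \<delta>V g"
  shows "sW_le \<delta>X \<delta>Y f (compl_rep \<delta>U) (compl_rep \<delta>V) (compl_prob g)"
proof -
  obtain H K where HK: "computable H" "computable K"
    "\<forall>G. realizes \<delta>U \<delta>V G g \<longrightarrow>
        realizes \<delta>X \<delta>Y (\<lambda>p. Option.bind (K p) (\<lambda>r. Option.bind (G r) H)) f"
    using assms unfolding sW_le_def by blast
  define K2 where "K2 p = Option.bind (K p) (\<lambda>r. Some (plus1 r))" for p
  define H2 where "H2 q = Option.bind (m1opt q) H" for q
  have cK: "computable K2" unfolding K2_def by (rule post_plus1[OF HK(2)])
  have cH: "computable H2" unfolding H2_def by (rule pre_minus1[OF HK(1)])
  have "realizes \<delta>X \<delta>Y (\<lambda>p. Option.bind (K2 p) (\<lambda>r. Option.bind (G r) H2)) f"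
    if G: "realizes (compl_rep \<delta>U) (compl_rep \<delta>V) G (compl_prob g)" for G
  proof -
    define G' where "G' r = Option.bind (G (plus1 r)) m1opt" for r
    have "realizes \<delta>U \<delta>V G' g"
      unfolding realizes_def
    proof (intro allI impI)
      fix r u assume a: "\<delta>U r = Some u \<and> u \<in> pdom g"
      then have c: "compl_rep \<delta>U (plus1 r) = Some (Some u)" by (simp add: compl_rep_plus1)
      have gu: "g u \<noteq> {}" using a by (simp add: pdom_def)
      have "Some u \<in> pdom (compl_prob g)" by (simp add: pdom_compl_prob)
      then obtain q y where qy: "G (plus1 r) = Some q" "compl_rep \<delta>V q = Some y" "y \<in> compl_prob g (Some u)"
        using G[unfolded realizes_def, rule_format, of "plus1 r" "Some u"] c by blast
      have "compl_prob g (Some u) = Some ` g u" using gu by (simp add: compl_prob_def)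
      then obtain v where v: "y = Some v" "v \<in> g u" using qy(3) by blast
      have "infinite (nz q) \<and> \<delta>V (minus1 q) = Some v" using compl_rep_SomeSome[of \<delta>V q v] qy(2)[unfolded v(1)] by (rule iffD1)
      then have i: "infinite (nz q)" and d: "\<delta>V (minus1 q) = Some v" by (rule conjunct1, rule conjunct2)
      have "G' r = Some (minus1 q)" using i qy(1) by (simp add: G'_def m1opt_def)
      then show "\<exists>q y. G' r = Some q \<and> \<delta>V q = Some y \<and> y \<in> g u"
        using d v by blast
    qed
    then have R: "realizes \<delta>X \<delta>Y (\<lambda>p. Option.bind (K p) (\<lambda>r. Option.bind (G' r) H)) f"
      using HK(3) by blast
    have "(\<lambda>p. Option.bind (K2 p) (\<lambda>r. Option.bind (G r) H2)) = (\<lambda>p. Option.bind (K p) (\<lambda>r. Option.bind (G' r) H))"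
    proof
      fix p show "Option.bind (K2 p) (\<lambda>r. Option.bind (G r) H2) = Option.bind (K p) (\<lambda>r. Option.bind (G' r) H)"
      proof (cases "K p")
        case None then show ?thesis by (simp add: K2_def)
      next
        case (Some r)
        then show ?thesis by (cases "G (plus1 r)") (simp_all add: K2_def G'_def H2_def)
      qed
    qed
    then show ?thesis using R by simp
  qed
  then show ?thesis unfolding sW_le_def using cK cH by blast
qed


lemma realizesD:
  "realizes \<delta>X \<delta>Y F f \<Longrightarrow> \<delta>X p = Some x \<Longrightarrow> x \<in> pdom f \<Longrightarrow>
     \<exists>q y. F p = Some q \<and> \<delta>Y q = Some y \<and> y \<in> f x"
  unfolding realizes_def by blast

lemma realizesI:
  "(\<And>p x. \<delta>X p = Some x \<Longrightarrow> x \<in> pdom f \<Longrightarrow> \<exists>q y. F p = Some q \<and> \<delta>Y q = Some y \<and> y \<in> f x)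
    \<Longrightarrow> realizes \<delta>X \<delta>Y F f"
  unfolding realizes_def by blast

lemma bind_SomeE:
  assumes "Option.bind (K p) (\<lambda>r. Option.bind (G r) H) = Some s"
  obtains r q where "K p = Some r" "G r = Some q" "H q = Some s"
  using assms by (cases "K p"; simp; cases "G (the (K p))"; simp)

lemma compl_fwd:
  assumes rX: "represented \<delta>X" and rV: "represented \<delta>V" and dv: "diverse f"
    and le: "sW_le \<delta>X \<delta>Y f (compl_rep \<delta>U) (compl_rep \<delta>V) (compl_prob g)"
  shows "sW_le \<delta>X \<delta>Y f \<delta>U \<delta>V g"
proof -
  obtain H K where HK: "computable H" "computable K"
    "\<And>G. realizes (compl_rep \<delta>U) (compl_rep \<delta>V) G (compl_prob g) \<Longrightarrow>
        realizes \<delta>X \<delta>Y (\<lambda>p. Option.bind (K p) (\<lambda>r. Option.bind (G r) H)) f"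
    using le unfolding sW_le_def by blast
  obtain G0 where G0: "realizes (compl_rep \<delta>U) (compl_rep \<delta>V) G0 (compl_prob g)"
    using realizer_ex[OF represented_compl[OF rV]] by blast
  have R0: "realizes \<delta>X \<delta>Y (\<lambda>p. Option.bind (K p) (\<lambda>r. Option.bind (G0 r) H)) f"
    by (rule HK(3)[OF G0])
  have key: "\<exists>r u. K p = Some r \<and> infinite (nz r) \<and> \<delta>U (minus1 r) = Some u \<and> g u \<noteq> {}"
    if px: "\<delta>X p = Some x" "x \<in> pdom f" for p x
  proof -
    obtain s b where sb: "Option.bind (K p) (\<lambda>r. Option.bind (G0 r) H) = Some s" "\<delta>Y s = Some b" "b \<in> f x"
      using realizesD[OF R0 px] by blast
    then obtain r where Kp: "K p = Some r" by (cases "K p") auto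
    show ?thesis
    proof (rule ccontr)
      assume nb: "\<not> ?thesis"
      obtain w where w: "compl_rep \<delta>U r = Some w" using compl_rep_Some by blast
      have univ: "compl_prob g w = UNIV"
      proof (rule ccontr)
        assume "compl_prob g w \<noteq> UNIV"
        then obtain u where u: "w = Some u" "g u \<noteq> {}" using compl_prob_UNIV by blast
        then have "infinite (nz r) \<and> \<delta>U (minus1 r) = Some u"
          using compl_rep_SomeSome[of \<delta>U r u] w by simp
        then show False using nb Kp u by blast
      qed
      obtain y where y: "y \<in> pdom f" "f x \<inter> f y = {}" using dv px(2) unfolding diverse_def by blast
      obtain p' where p': "\<delta>X p' = Some y" using rX unfolding represented_def by blast
      obtain s' b' where sb': "Option.bind (K p') (\<lambda>r. Option.bind (G0 r) H) = Some s'" "\<delta>Y s' = Some b'" "b' \<in> f y"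
        using realizesD[OF R0 p' y(1)] by blast
      obtain r' q' where rq': "K p' = Some r'" "G0 r' = Some q'" "H q' = Some s'"
        using bind_SomeE[of K p' G0 H s', OF sb'(1)] by blast
      define G1 where "G1 = G0(r := Some q')"
      have G1: "realizes (compl_rep \<delta>U) (compl_rep \<delta>V) G1 (compl_prob g)"
      proof (rule realizesI)
        fix r0 w0 assume a: "compl_rep \<delta>U r0 = Some w0" "w0 \<in> pdom (compl_prob g)"
        show "\<exists>q y. G1 r0 = Some q \<and> compl_rep \<delta>V q = Some y \<and> y \<in> compl_prob g w0"
        proof (cases "r0 = r")
          case True
          then have "w0 = w" using a w by simp
          obtain z where "compl_rep \<delta>V q' = Some z" using compl_rep_Some by blast
          then show ?thesis using True univ \<open>w0 = w\<close> by (simp add: G1_def)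
        next
          case False
          then show ?thesis using realizesD[OF G0 a] by (simp add: G1_def)
        qed
      qed
      have R1: "realizes \<delta>X \<delta>Y (\<lambda>p. Option.bind (K p) (\<lambda>r. Option.bind (G1 r) H)) f"
        by (rule HK(3)[OF G1])
      have e: "Option.bind (K p) (\<lambda>r. Option.bind (G1 r) H) = Some s'"
        using Kp rq'(3) by (simp add: G1_def)
      obtain s2 b2 where sb2: "Option.bind (K p) (\<lambda>r. Option.bind (G1 r) H) = Some s2" "\<delta>Y s2 = Some b2" "b2 \<in> f x"
        using realizesD[OF R1 px] by blast
      have "b2 = b'" using sb2 e sb'(2) by simp
      then show False using sb2(3) sb'(3) y(2) by blast
    qed
  qed
  define K' where "K' p = Option.bind (K p) m1opt" for p
  define H' where "H' q = H (plus1 q)" for q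
  have cK: "computable K'" unfolding K'_def by (rule post_minus1[OF HK(2)])
  have cH: "computable H'" unfolding H'_def by (rule pre_plus1[OF HK(1)])
  have "realizes \<delta>X \<delta>Y (\<lambda>p. Option.bind (K' p) (\<lambda>r. Option.bind (G r) H')) f"
    if G: "realizes \<delta>U \<delta>V G g" for G
  proof -
    define Gt where "Gt r = (case G (minus1 r) of None \<Rightarrow> Some (\<lambda>_. 0) | Some q \<Rightarrow> Some (plus1 q))" for r
    have Gt: "realizes (compl_rep \<delta>U) (compl_rep \<delta>V) Gt (compl_prob g)"
    proof (rule realizesI)
      fix r w assume a: "compl_rep \<delta>U r = Some w" "w \<in> pdom (compl_prob g)"
      show "\<exists>q y. Gt r = Some q \<and> compl_rep \<delta>V q = Some y \<and> y \<in> compl_prob g w"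
      proof (cases "compl_prob g w = UNIV")
        case True
        obtain t where t: "Gt r = Some t" by (cases "G (minus1 r)") (auto simp: Gt_def)
        obtain z where "compl_rep \<delta>V t = Some z" using compl_rep_Some by blast
        then show ?thesis using t True by simp
      next
        case False
        then obtain u where u: "w = Some u" "g u \<noteq> {}" using compl_prob_UNIV by blast
        then have iu: "infinite (nz r) \<and> \<delta>U (minus1 r) = Some u"
          using compl_rep_SomeSome[of \<delta>U r u] a(1) by simp
        have "u \<in> pdom g" using u by (simp add: pdom_def)
        then obtain q v where qv: "G (minus1 r) = Some q" "\<delta>V q = Some v" "v \<in> g u"
          using realizesD[OF G] iu by blast
        have "Gt r = Some (plus1 q)" using qv by (simp add: Gt_def)
        moreover have "compl_rep \<delta>V (plus1 q) = Some (Some v)" using qv(2) by (rule compl_rep_plus1)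
        moreover have "Some v \<in> compl_prob g w" using u qv(3) by (simp add: compl_prob_def)
        ultimately show ?thesis by blast
      qed
    qed
    have Rt: "realizes \<delta>X \<delta>Y (\<lambda>p. Option.bind (K p) (\<lambda>r. Option.bind (Gt r) H)) f"
      by (rule HK(3)[OF Gt])
    show ?thesis
    proof (rule realizesI)
      fix p x assume px: "\<delta>X p = Some x" "x \<in> pdom f"
      obtain r u where ru: "K p = Some r" "infinite (nz r)" "\<delta>U (minus1 r) = Some u" "g u \<noteq> {}"
        using key[OF px] by blast
      have "u \<in> pdom g" using ru(4) by (simp add: pdom_def)
      then obtain q v where qv: "G (minus1 r) = Some q" "\<delta>V q = Some v" "v \<in> g u"
        using realizesD[OF G ru(3)] by blast
      have e1: "Option.bind (K p) (\<lambda>r. Option.bind (Gt r) H) = H (plus1 q)"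
        using ru(1) qv(1) by (simp add: Gt_def)
      have e2: "Option.bind (K' p) (\<lambda>r. Option.bind (G r) H') = H (plus1 q)"
        using ru(1,2) qv(1) by (simp add: K'_def H'_def m1opt_def)
      show "\<exists>q y. Option.bind (K' p) (\<lambda>r. Option.bind (G r) H') = Some q \<and> \<delta>Y q = Some y \<and> y \<in> f x"
        using realizesD[OF Rt px] e1 e2 by simp
    qed
  qed
  then show ?thesis unfolding sW_le_def using cK cH by blast
qed


lemma tot_back:
  assumes le: "sW_le \<delta>X \<delta>Y f \<delta>U \<delta>V g"
  shows "sW_le \<delta>X \<delta>Y f \<delta>U \<delta>V (totalization g)"
proof -
  obtain H K where HK: "computable H" "computable K"
    "\<And>G. realizes \<delta>U \<delta>V G g \<Longrightarrow>
        realizes \<delta>X \<delta>Y (\<lambda>p. Option.bind (K p) (\<lambda>r. Option.bind (G r) H)) f"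
    using le unfolding sW_le_def by blast
  have "realizes \<delta>U \<delta>V G g" if G: "realizes \<delta>U \<delta>V G (totalization g)" for G
  proof (rule realizesI)
    fix r u assume a: "\<delta>U r = Some u" "u \<in> pdom g"
    then have "u \<in> pdom (totalization g)" "totalization g u = g u"
      by (auto simp: pdom_def totalization_def)
    then show "\<exists>q y. G r = Some q \<and> \<delta>V q = Some y \<and> y \<in> g u"
      using realizesD[OF G a(1)] by simp
  qed
  then show ?thesis unfolding sW_le_def using HK by blast
qed

lemma tot_fwd:
  assumes rX: "represented \<delta>X" and rV: "represented \<delta>V" and dv: "diverse f"
    and le: "sW_le \<delta>X \<delta>Y f \<delta>U \<delta>V (totalization g)"
  shows "sW_le \<delta>X \<delta>Y f \<delta>U \<delta>V g"
proof -
  obtain H K where HK: "computable H" "computable K"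
    "\<And>G. realizes \<delta>U \<delta>V G (totalization g) \<Longrightarrow>
        realizes \<delta>X \<delta>Y (\<lambda>p. Option.bind (K p) (\<lambda>r. Option.bind (G r) H)) f"
    using le unfolding sW_le_def by blast
  obtain G0 where G0: "realizes \<delta>U \<delta>V G0 (totalization g)"
    using realizer_ex[OF rV] by blast
  have R0: "realizes \<delta>X \<delta>Y (\<lambda>p. Option.bind (K p) (\<lambda>r. Option.bind (G0 r) H)) f"
    by (rule HK(3)[OF G0])
  obtain q0 v0 where q0: "\<delta>V q0 = Some v0" using rV unfolding represented_def by blast
  have pT: "u \<in> pdom (totalization g)" for u by (simp add: pdom_def totalization_def)
  have key: "\<exists>r u. K p = Some r \<and> \<delta>U r = Some u \<and> g u \<noteq> {}"
    if px: "\<delta>X p = Some x" "x \<in> pdom f" for p x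
  proof -
    obtain s b where sb: "Option.bind (K p) (\<lambda>r. Option.bind (G0 r) H) = Some s" "\<delta>Y s = Some b" "b \<in> f x"
      using realizesD[OF R0 px] by blast
    then obtain r where Kp: "K p = Some r" by (cases "K p") auto
    show ?thesis
    proof (rule ccontr)
      assume nb: "\<not> ?thesis"
      show False
      proof (cases "\<delta>U r")
        case None
        define G1 where "G1 = G0(r := None)"
        have G1: "realizes \<delta>U \<delta>V G1 (totalization g)"
        proof (rule realizesI)
          fix r0 u0 assume a: "\<delta>U r0 = Some u0" "u0 \<in> pdom (totalization g)"
          then have "r0 \<noteq> r" using None by auto
          then show "\<exists>q y. G1 r0 = Some q \<and> \<delta>V q = Some y \<and> y \<in> totalization g u0"
            using realizesD[OF G0 a] by (simp add: G1_def)
        qed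
        have "Option.bind (K p) (\<lambda>r. Option.bind (G1 r) H) = None"
          using Kp by (simp add: G1_def)
        then show False using realizesD[OF HK(3)[OF G1] px] by simp
      next
        case (Some u)
        then have gu: "g u = {}" using nb Kp by blast
        obtain y where y: "y \<in> pdom f" "f x \<inter> f y = {}" using dv px(2) unfolding diverse_def by blast
        obtain p' where p': "\<delta>X p' = Some y" using rX unfolding represented_def by blast
        obtain s' b' where sb': "Option.bind (K p') (\<lambda>r. Option.bind (G0 r) H) = Some s'" "\<delta>Y s' = Some b'" "b' \<in> f y"
          using realizesD[OF R0 p' y(1)] by blast
        obtain r' q' where rq': "K p' = Some r'" "G0 r' = Some q'" "H q' = Some s'"
          using bind_SomeE[of K p' G0 H s', OF sb'(1)] by blast
        define qs where "qs = (if \<delta>V q' \<noteq> None then q' else q0)"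
        have qsV: "\<delta>V qs \<noteq> None" using q0 by (simp add: qs_def)
        define G1 where "G1 = G0(r := Some qs, r' := Some qs)"
        have G1: "realizes \<delta>U \<delta>V G1 (totalization g)"
        proof (rule realizesI)
          fix r0 u0 assume a: "\<delta>U r0 = Some u0" "u0 \<in> pdom (totalization g)"
          show "\<exists>q y. G1 r0 = Some q \<and> \<delta>V q = Some y \<and> y \<in> totalization g u0"
          proof (cases "r0 = r'")
            case True
            obtain qq yy where "G0 r0 = Some qq" "\<delta>V qq = Some yy" "yy \<in> totalization g u0"
              using realizesD[OF G0 a] by blast
            then have "qq = q'" "qs = q'" using True rq'(2) by (auto simp: qs_def)
            then show ?thesis using True \<open>\<delta>V qq = Some yy\<close> \<open>yy \<in> totalization g u0\<close>
              by (simp add: G1_def)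
          next
            case False
            show ?thesis
            proof (cases "r0 = r")
              case True
              then have "u0 = u" using a Some by simp
              then have "totalization g u0 = UNIV" using gu by (simp add: totalization_def)
              then show ?thesis using True False qsV by (auto simp: G1_def)
            next
              case False2: False
              then show ?thesis using False realizesD[OF G0 a] by (simp add: G1_def)
            qed
          qed
        qed
        note R1 = HK(3)[OF G1]
        have e1: "Option.bind (K p') (\<lambda>r. Option.bind (G1 r) H) = H qs"
          using rq'(1) by (simp add: G1_def)
        have e2: "Option.bind (K p) (\<lambda>r. Option.bind (G1 r) H) = H qs"
          using Kp by (simp add: G1_def)
        obtain s1 b1 where sb1: "H qs = Some s1" "\<delta>Y s1 = Some b1" "b1 \<in> f y"
          using realizesD[OF R1 p' y(1)] e1 by auto
        obtain s2 b2 where sb2: "H qs = Some s2" "\<delta>Y s2 = Some b2" "b2 \<in> f x"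
          using realizesD[OF R1 px] e2 by auto
        have "b1 = b2" using sb1 sb2 by simp
        then show False using sb1(3) sb2(3) y(2) by blast
      qed
    qed
  qed
  have "realizes \<delta>X \<delta>Y (\<lambda>p. Option.bind (K p) (\<lambda>r. Option.bind (G r) H)) f"
    if G: "realizes \<delta>U \<delta>V G g" for G
  proof -
    define Gt where "Gt r = (if \<exists>u. \<delta>U r = Some u \<and> g u = {} then Some q0 else G r)" for r
    have Gt: "realizes \<delta>U \<delta>V Gt (totalization g)"
    proof (rule realizesI)
      fix r u assume a: "\<delta>U r = Some u" "u \<in> pdom (totalization g)"
      show "\<exists>q y. Gt r = Some q \<and> \<delta>V q = Some y \<and> y \<in> totalization g u"
      proof (cases "g u = {}")
        case True
        then show ?thesis using a q0 by (auto simp: Gt_def totalization_def)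
      next
        case False
        then have "u \<in> pdom g" "Gt r = G r" "totalization g u = g u"
          using a by (auto simp: pdom_def Gt_def totalization_def)
        then show ?thesis using realizesD[OF G a(1)] by simp
      qed
    qed
    have Rt: "realizes \<delta>X \<delta>Y (\<lambda>p. Option.bind (K p) (\<lambda>r. Option.bind (Gt r) H)) f"
      by (rule HK(3)[OF Gt])
    show ?thesis
    proof (rule realizesI)
      fix p x assume px: "\<delta>X p = Some x" "x \<in> pdom f"
      obtain r u where ru: "K p = Some r" "\<delta>U r = Some u" "g u \<noteq> {}"
        using key[OF px] by blast
      have "Gt r = G r" using ru(2,3) by (simp add: Gt_def)
      then have "Option.bind (K p) (\<lambda>r. Option.bind (Gt r) H) = Option.bind (K p) (\<lambda>r. Option.bind (G r) H)"
        using ru(1) by simp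
      then show "\<exists>q y. Option.bind (K p) (\<lambda>r. Option.bind (G r) H) = Some q \<and> \<delta>Y q = Some y \<and> y \<in> f x"
        using realizesD[OF Rt px] by simp
    qed
  qed
  then show ?thesis unfolding sW_le_def using HK by blast
qed

theorem proposition4p13:
  fixes \<delta>X :: "baire \<Rightarrow> 'x option" and \<delta>Y :: "baire \<Rightarrow> 'y option"
    and \<delta>U :: "baire \<Rightarrow> 'u option" and \<delta>V :: "baire \<Rightarrow> 'v option"
    and f :: "'x \<Rightarrow> 'y set" and g :: "'u \<Rightarrow> 'v set"
  assumes "represented \<delta>X" and "represented \<delta>Y"
    and "represented \<delta>U" and "represented \<delta>V"
    and "diverse f"
  shows "(sW_le \<delta>X \<delta>Y f (compl_rep \<delta>U) (compl_rep \<delta>V) (compl_prob g)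
            \<longleftrightarrow> sW_le \<delta>X \<delta>Y f \<delta>U \<delta>V g)
       \<and> ((\<forall>p. \<delta>Y p \<noteq> None) \<longrightarrow>
            (sW_le \<delta>X \<delta>Y f \<delta>U \<delta>V (totalization g) \<longleftrightarrow> sW_le \<delta>X \<delta>Y f \<delta>U \<delta>V g))"
  using compl_fwd[OF assms(1) assms(4) assms(5)] compl_back
    tot_fwd[OF assms(1) assms(4) assms(5)] tot_back
  by blast


end
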